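(* Fix a diagram $D\subseteq[n]\times[n]$ and $k,l\in[n]$. Let $\{\widehat{C}^{(i)}\}_{i\in[m]}$ be diagrams with $\widehat{C}^{(i)}\le\widehat{D}$ for each $i$, and write $C^{(i)}=\widehat{C}^{(i)}_{\mathrm{aug}}$. If the polynomials $\Big\{\prod_{j\in[n]}\det\big(Y^{C^{(i)}_j}_{D_j}\big)\Big\}_{i\in[m]}$ are linearly dependent over $\mathbb{C}$, then so are the polynomials $\Big\{\prod_{j\in[n]\setminus\{l\}}\det\big(Y^{\widehat{C}^{(i)}_j}_{\widehat{D}_j}\big)\Big\}_{i\in[m]}$.
   Context: A diagram $D\subseteq[n]\times[n]$ is a set of boxes $(i,j)$ (row $i$, column $j$), identified with its column sequence $(D_1,\dots,D_n)$, $D_j=\{i:(i,j)\in D\}$. For $R,S\subseteq[n]$, $R\le S$ means $\#R=\#S$ and the $k$-th smallest element of $R$ is at most the $k$-th smallest element of $S$ for each $k$; for diagrams $C\le D$ means $C_j\le D_j$ for all $j$. $\widehat{C},\widehat{D}$ denote the diagrams obtained by removing all boxes in row $k$ or column $l$, and $\widehat{C}_{\mathrm{aug}}=\widehat{C}\cup\{(k,i):(k,i)\in D\}\cup\{(i,l):(i,l)\in D\}$. $Y$ is the $n\times n$ upper-triangular matrix with indeterminates $y_{ij}$ ($i\le j$) and zeros below the diagonal; $Y^R_S$ is its submatrix with rows $R$ and columns $S$; the determinant of an empty matrix is $1$. The polynomials live in $\mathbb{C}[y_{ij}: i\le j]$. *)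

theory Defs
  imports "HOL-Library.Poly_Mapping" "Jordan_Normal_Form.Determinant" Complex_Main
begin

text \<open>Polynomials in C[y_ij : i <= j]: finitely supported maps from monomials
(finitely supported exponent vectors on index pairs (i,j)) to complex coefficients.\<close>
type_synonym cpoly = "((nat \<times> nat) \<Rightarrow>\<^sub>0 nat) \<Rightarrow>\<^sub>0 complex"

definition yvar :: "nat \<Rightarrow> nat \<Rightarrow> cpoly" where
  "yvar i j = Poly_Mapping.single (Poly_Mapping.single (i, j) 1) 1"

definition const_poly :: "complex \<Rightarrow> cpoly" where
  "const_poly c = Poly_Mapping.single 0 c"

text \<open>The upper-triangular generic matrix Y (1-based indices).\<close>
definition Yent :: "nat \<Rightarrow> nat \<Rightarrow> cpoly" where
  "Yent i j = (if i \<le> j then yvar i j else 0)"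

text \<open>det(Y^R_S): rows R and columns S taken in increasing order; empty minor has det 1.
  (Only used when #R = #S; set to 0 otherwise.)\<close>
definition minor_det :: "nat set \<Rightarrow> nat set \<Rightarrow> cpoly" where
  "minor_det R S =
    (let rs = sorted_list_of_set R; cs = sorted_list_of_set S
     in if length rs = length cs
        then det (mat (length rs) (length rs) (\<lambda>(a, b). Yent (rs ! a) (cs ! b)))
        else 0)"

definition col :: "(nat \<times> nat) set \<Rightarrow> nat \<Rightarrow> nat set" where
  "col D j = {i. (i, j) \<in> D}"

definition set_le :: "nat set \<Rightarrow> nat set \<Rightarrow> bool" where
  "set_le R S \<longleftrightarrow> card R = card S \<and>
     (\<forall>t < card R. sorted_list_of_set R ! t \<le> sorted_list_of_set S ! t)"

definition diag_le :: "nat \<Rightarrow> (nat \<times> nat) set \<Rightarrow> (nat \<times> nat) set \<Rightarrow> bool" where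
  "diag_le n C D \<longleftrightarrow> (\<forall>j \<in> {1..n}. set_le (col C j) (col D j))"

definition is_diagram :: "nat \<Rightarrow> (nat \<times> nat) set \<Rightarrow> bool" where
  "is_diagram n D \<longleftrightarrow> D \<subseteq> {1..n} \<times> {1..n}"

definition hat :: "nat \<Rightarrow> nat \<Rightarrow> (nat \<times> nat) set \<Rightarrow> (nat \<times> nat) set" where
  "hat k l D = {(i, j) \<in> D. i \<noteq> k \<and> j \<noteq> l}"

definition aug :: "nat \<Rightarrow> nat \<Rightarrow> (nat \<times> nat) set \<Rightarrow> (nat \<times> nat) set \<Rightarrow> (nat \<times> nat) set" where
  "aug k l D Ch = Ch \<union> {(k, i) | i. (k, i) \<in> D} \<union> {(i, l) | i. (i, l) \<in> D}"

definition lin_dep :: "nat \<Rightarrow> (nat \<Rightarrow> cpoly) \<Rightarrow> bool" where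
  "lin_dep m P \<longleftrightarrow> (\<exists>c :: nat \<Rightarrow> complex.
      (\<exists>i \<in> {1..m}. c i \<noteq> 0) \<and> (\<Sum>i = 1..m. const_poly (c i) * P i) = 0)"

end

theory Submission
  imports Defs
begin

definition good :: "nat \<Rightarrow> ((nat \<times> nat) \<Rightarrow>\<^sub>0 nat) \<Rightarrow> bool" where
  "good k m \<longleftrightarrow> (\<forall>c. c \<noteq> k \<longrightarrow> Poly_Mapping.lookup m (k, c) = 0)"

definition phi :: "nat \<Rightarrow> cpoly \<Rightarrow> cpoly" where
  "phi k p = Abs_poly_mapping (\<lambda>m. if good k m then Poly_Mapping.lookup p m else 0)"

lemma lookup_phi: "Poly_Mapping.lookup (phi k p) m = (if good k m then Poly_Mapping.lookup p m else 0)"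
proof -
  have "finite {m. (if good k m then Poly_Mapping.lookup p m else 0) \<noteq> 0}"
    by (rule finite_subset[of _ "{m. Poly_Mapping.lookup p m \<noteq> 0}"]) auto
  then show ?thesis unfolding phi_def by (simp add: lookup_Abs_poly_mapping)
qed

lemma good_add: "good k (a + b) \<longleftrightarrow> good k a \<and> good k b"
  by (auto simp: good_def lookup_add)

lemma phi_add: "phi k (p + q) = phi k p + phi k q"
  by (rule poly_mapping_eqI) (simp add: lookup_phi lookup_add)

lemma phi_zero: "phi k 0 = 0"
  by (rule poly_mapping_eqI) (simp add: lookup_phi)

lemma phi_one: "phi k 1 = 1"
  by (rule poly_mapping_eqI) (simp add: lookup_phi lookup_one good_def when_def)

lemma phi_mult: "phi k (p * q) = phi k p * phi k q"
proof (rule poly_mapping_eqI)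
  fix m
  show "Poly_Mapping.lookup (phi k (p * q)) m = Poly_Mapping.lookup (phi k p * phi k q) m"
  proof (cases "good k m")
    case True
    have "Poly_Mapping.lookup (phi k p * phi k q) m = (\<Sum>l. Poly_Mapping.lookup p l * (\<Sum>r. Poly_Mapping.lookup q r when m = l + r))"
      unfolding lookup_mult
    proof (rule Sum_any.cong)
      fix l
      show "Poly_Mapping.lookup (phi k p) l * (\<Sum>r. Poly_Mapping.lookup (phi k q) r when m = l + r) =
            Poly_Mapping.lookup p l * (\<Sum>r. Poly_Mapping.lookup q r when m = l + r)"
      proof (cases "good k l")
        case True
        have "(\<Sum>r. Poly_Mapping.lookup (phi k q) r when m = l + r) = (\<Sum>r. Poly_Mapping.lookup q r when m = l + r)"
          by (rule Sum_any.cong) (use \<open>good k m\<close> in \<open>auto simp: lookup_phi good_add when_def\<close>)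
        then show ?thesis using True by (simp add: lookup_phi)
      next
        case False
        have "(\<Sum>r. Poly_Mapping.lookup q r when m = l + r) = Sum_any (\<lambda>r::(nat\<times>nat)\<Rightarrow>\<^sub>0nat. 0::complex)"
          by (rule Sum_any.cong) (use \<open>good k m\<close> False in \<open>auto simp: good_add when_def\<close>)
        then show ?thesis using False by (simp add: lookup_phi)
      qed
    qed
    then show ?thesis using True by (simp add: lookup_phi lookup_mult)
  next
    case False
    have "Poly_Mapping.lookup (phi k p * phi k q) m = Sum_any (\<lambda>l::(nat\<times>nat)\<Rightarrow>\<^sub>0nat. 0::complex)"
      unfolding lookup_mult
    proof (rule Sum_any.cong)
      fix l
      have "(\<Sum>r. Poly_Mapping.lookup (phi k q) r when m = l + r) = Sum_any (\<lambda>r::(nat\<times>nat)\<Rightarrow>\<^sub>0nat. 0::complex)" if "good k l"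
        by (rule Sum_any.cong) (use False that in \<open>auto simp: lookup_phi good_add when_def\<close>)
      then show "Poly_Mapping.lookup (phi k p) l * (\<Sum>r. Poly_Mapping.lookup (phi k q) r when m = l + r) = 0"
        by (cases "good k l") (auto simp: lookup_phi)
    qed
    then show ?thesis using False by (simp add: lookup_phi)
  qed
qed

interpretation phi_hom: comm_ring_hom "phi k"
  by unfold_locales (auto simp: phi_add phi_one phi_mult phi_zero)

lemma sorted_insert_split:
  fixes R :: "nat set"
  assumes "finite R" "k \<notin> R"
  defines "rs \<equiv> sorted_list_of_set (insert k R)" and "rs' \<equiv> sorted_list_of_set R"
  shows "\<exists>p < length rs. rs ! p = k \<and> length rs = Suc (length rs') \<and>
           (\<forall>a < length rs'. rs' ! a = rs ! insert_index p a)"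
proof -
  have ins: "rs = insort k rs'" unfolding rs_def rs'_def using assms by (simp add: sorted_list_of_set_insert)
  have dist: "distinct rs" unfolding rs_def by simp
  have "k \<in> set rs" unfolding ins by (simp add: set_insort_key)
  then obtain p where p: "p < length rs" "rs ! p = k" by (auto simp: in_set_conv_nth)
  have split: "rs = take p rs @ k # drop (Suc p) rs" by (metis id_take_nth_drop p)
  have nk: "k \<notin> set (take p rs)"
  proof
    assume "k \<in> set (take p rs)"
    then obtain i where i: "i < length (take p rs)" "take p rs ! i = k" by (auto simp: in_set_conv_nth)
    then have "rs ! i = rs ! p" "i < p" using p by auto
    with dist p show False by (metis nth_eq_iff_index_eq less_trans less_irrefl)
  qed
  have "rs' = remove1 k rs" using ins by simp
  also have "\<dots> = take p rs @ drop (Suc p) rs"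
    by (subst split) (simp add: remove1_append nk)
  finally have rs': "rs' = take p rs @ drop (Suc p) rs" .
  have len: "length rs = Suc (length rs')" using rs' p by simp
  show ?thesis
  proof (intro exI[of _ p] conjI allI impI p len)
    fix a assume "a < length rs'"
    then show "rs' ! a = rs ! insert_index p a"
      unfolding rs' using p by (auto simp: nth_append insert_index_def min_def)
  qed
qed

lemma phi_yvar: "phi k (yvar i j) = (if i = k \<and> j \<noteq> k then 0 else yvar i j)"
  by (rule poly_mapping_eqI)
     (auto simp: lookup_phi yvar_def good_def lookup_single when_def split: if_splits)

lemma phi_Yent: "phi k (Yent i j) = (if i = k \<and> j \<noteq> k then 0 else Yent i j)"
  by (simp add: Yent_def phi_yvar phi_zero)

lemma phi_const: "phi k (const_poly c) = const_poly c"
  by (rule poly_mapping_eqI)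
     (auto simp: lookup_phi const_poly_def good_def lookup_single when_def)

definition nzd :: "cpoly \<Rightarrow> bool" where
  "nzd x \<longleftrightarrow> (\<forall>q. x * q = 0 \<longrightarrow> q = 0)"

lemma nzd_mult: "nzd x \<Longrightarrow> nzd y \<Longrightarrow> nzd (x * y)"
  unfolding nzd_def by (metis mult.assoc)

lemma nzd_one: "nzd 1"
  by (simp add: nzd_def)

lemma nzd_prod_list: "(\<And>x. x \<in> set xs \<Longrightarrow> nzd x) \<Longrightarrow> nzd (prod_list xs)"
  by (induction xs) (auto intro: nzd_mult nzd_one)

lemma lookup_single_mult: 
  "Poly_Mapping.lookup (Poly_Mapping.single (m::(nat\<times>nat)\<Rightarrow>\<^sub>0nat) (1::complex) * q) (m + x) = Poly_Mapping.lookup q x"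
proof -
  have "Poly_Mapping.lookup (Poly_Mapping.single m (1::complex) * q) (m + x)
     = (\<Sum>l. ((\<Sum>r. Poly_Mapping.lookup q r when m + x = l + r) when m = l))"
    unfolding lookup_mult lookup_single by (simp only: when_mult mult_1)
  also have "\<dots> = (\<Sum>r. Poly_Mapping.lookup q r when m + x = m + r)"
    by (rule Sum_any_when_equal')
  also have "\<dots> = (\<Sum>r. Poly_Mapping.lookup q r when x = r)"
    by simp
  also have "\<dots> = Poly_Mapping.lookup q x" by (rule Sum_any_when_equal')
  finally show ?thesis .
qed

lemma nzd_yvar: "nzd (yvar i j)"
  unfolding nzd_def yvar_def
proof (intro allI impI)
  fix q :: cpoly
  assume "Poly_Mapping.single (Poly_Mapping.single (i, j) 1) 1 * q = 0"
  then show "q = 0"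
    by (metis lookup_single_mult lookup_zero poly_mapping_eqI)
qed


lemma sorted_nth_in: "finite R \<Longrightarrow> a < length (sorted_list_of_set R) \<Longrightarrow> sorted_list_of_set R ! a \<in> R"
  by (metis nth_mem set_sorted_list_of_set)

lemma minor_det_fix:
  assumes "finite R" "k \<notin> R"
  shows "phi k (minor_det R S) = minor_det R S"
proof (cases "length (sorted_list_of_set R) = length (sorted_list_of_set S)")
  case True
  let ?rs = "sorted_list_of_set R" and ?cs = "sorted_list_of_set S"
  let ?N = "length ?rs"
  let ?M = "mat ?N ?N (\<lambda>(a, b). Yent (?rs ! a) (?cs ! b))"
  have "map_mat (phi k) ?M = ?M"
  proof (rule eq_matI)
    fix a b assume ab: "a < dim_row ?M" "b < dim_col ?M"
    then have "?rs ! a \<in> R" using assms by (simp add: sorted_nth_in)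
    then have "?rs ! a \<noteq> k" using assms by auto
    then show "map_mat (phi k) ?M $$ (a, b) = ?M $$ (a, b)" using ab by (simp add: phi_Yent)
  qed auto
  then have "phi k (det ?M) = det ?M" by (metis phi_hom.hom_det)
  then show ?thesis using True by (simp add: minor_det_def Let_def)
next
  case False
  then show ?thesis by (simp add: minor_det_def Let_def phi_zero)
qed

lemma minor_det_diag:
  assumes "finite S"
  shows "minor_det S S = prod_list (map (\<lambda>s. yvar s s) (sorted_list_of_set S))"
proof -
  let ?rs = "sorted_list_of_set S"
  let ?N = "length ?rs"
  let ?M = "mat ?N ?N (\<lambda>(a, b). Yent (?rs ! a) (?rs ! b))"
  have ss: "sorted_wrt (<) ?rs" by simp
  have ut: "upper_triangular ?M"
    unfolding upper_triangular_def
  proof (intro allI impI)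
    fix i j assume "i < dim_row ?M" "j < i"
    then have "?rs ! j < ?rs ! i" using ss by (simp add: sorted_wrt_nth_less)
    then show "?M $$ (i, j) = 0" using \<open>i < dim_row ?M\<close> \<open>j < i\<close> by (simp add: Yent_def)
  qed
  have "det ?M = prod_list (diag_mat ?M)" by (rule det_upper_triangular[OF ut]) auto
  also have "diag_mat ?M = map (\<lambda>s. yvar s s) ?rs"
    unfolding diag_mat_def by (rule nth_equalityI) (auto simp: Yent_def)
  finally show ?thesis by (simp add: minor_det_def Let_def)
qed

lemma nzd_minor_diag: "finite S \<Longrightarrow> nzd (minor_det S S)"
  by (simp add: minor_det_diag) (rule nzd_prod_list, auto simp: nzd_yvar)

lemma phi_minor_diag: "finite S \<Longrightarrow> phi k (minor_det S S) = minor_det S S"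
proof -
  assume S: "finite S"
  have "phi k (prod_list (map (\<lambda>s. yvar s s) (sorted_list_of_set S)))
     = prod_list (map (phi k \<circ> (\<lambda>s. yvar s s)) (sorted_list_of_set S))"
    by (simp add: phi_hom.hom_prod_list)
  also have "\<dots> = prod_list (map (\<lambda>s. yvar s s) (sorted_list_of_set S))"
    by (simp add: phi_yvar comp_def)
  finally show ?thesis using S by (simp add: minor_det_diag)
qed


lemma const_poly_mult: "const_poly (a * b) = const_poly a * const_poly b"
  by (simp add: const_poly_def mult_single)

lemma const_poly_one: "const_poly 1 = 1"
  by (simp add: const_poly_def)

lemma const_poly_neg_one_pow: "const_poly ((-1) ^ n) = (-1) ^ n"
proof (induction n)
  case 0 then show ?case by (simp add: const_poly_one)
next
  case (Suc n)
  have "const_poly ((-1) ^ Suc n) = const_poly (-1) * const_poly ((-1) ^ n)"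
    by (simp add: const_poly_mult[symmetric])
  also have "const_poly (-1) = -1" by (simp add: const_poly_def single_uminus)
  finally show ?case using Suc by simp
qed

lemma minor_det_ins:
  assumes R: "finite R" and S: "finite S" and kR: "k \<notin> R" and kS: "k \<notin> S"
    and card: "card R = card S"
  shows "\<exists>e. e \<noteq> 0 \<and> phi k (minor_det (insert k R) (insert k S)) = const_poly e * yvar k k * minor_det R S"
proof -
  define rs where "rs = sorted_list_of_set (insert k R)"
  define rs' where "rs' = sorted_list_of_set R"
  define cs where "cs = sorted_list_of_set (insert k S)"
  define cs' where "cs' = sorted_list_of_set S"
  obtain p where p: "p < length rs" "rs ! p = k" "length rs = Suc (length rs')"
    "\<And>a. a < length rs' \<Longrightarrow> rs' ! a = rs ! insert_index p a"
    using sorted_insert_split[OF R kR] unfolding rs_def rs'_def by blast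
  obtain q where q: "q < length cs" "cs ! q = k" "length cs = Suc (length cs')"
    "\<And>a. a < length cs' \<Longrightarrow> cs' ! a = cs ! insert_index q a"
    using sorted_insert_split[OF S kS] unfolding cs_def cs'_def by blast
  define N' where "N' = length rs'"
  have lrs': "length cs' = N'" unfolding N'_def rs'_def cs'_def using card by simp
  define N where "N = Suc N'"
  have lrs: "length rs = N" "length cs = N" using p q lrs' unfolding N_def N'_def by auto
  define M where "M = mat N N (\<lambda>(a, b). Yent (rs ! a) (cs ! b))"
  define M' where "M' = mat N' N' (\<lambda>(a, b). Yent (rs' ! a) (cs' ! b))"
  define B where "B = map_mat (phi k) M"
  have m1: "minor_det (insert k R) (insert k S) = det M"
    unfolding minor_det_def Let_def M_def using lrs by (simp add: rs_def cs_def)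
  have m2: "minor_det R S = det M'"
    unfolding minor_det_def Let_def M'_def using lrs' by (simp add: rs'_def cs'_def N'_def)
  have Bc: "B \<in> carrier_mat N N" unfolding B_def M_def by simp
  have pN: "p < N" "q < N" using p q lrs by auto
  have distc: "distinct cs" unfolding cs_def by simp
  have "det B = (\<Sum>b<N. B $$ (p, b) * cofactor B p b)"
    by (rule laplace_expansion_row[OF Bc pN(1)])
  also have "\<dots> = B $$ (p, q) * cofactor B p q"
  proof -
    have z: "\<forall>b\<in>{..<N} - {q}. B $$ (p, b) * cofactor B p b = 0"
    proof
      fix b assume b: "b \<in> {..<N} - {q}"
      then have "cs ! b \<noteq> k" using q distc lrs by (auto simp: nth_eq_iff_index_eq)
      then show "B $$ (p, b) * cofactor B p b = 0"
        using b pN p unfolding B_def M_def by (simp add: phi_Yent)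
    qed
    have "(\<Sum>b<N. B $$ (p, b) * cofactor B p b) = B $$ (p, q) * cofactor B p q
       + (\<Sum>b\<in>{..<N} - {q}. B $$ (p, b) * cofactor B p b)"
      by (rule sum.remove) (use pN in auto)
    also have "(\<Sum>b\<in>{..<N} - {q}. B $$ (p, b) * cofactor B p b) = 0"
      using z by (rule sum.neutral)
    finally show ?thesis by simp
  qed
  also have "B $$ (p, q) = yvar k k"
    using pN p q unfolding B_def M_def by (simp add: phi_Yent Yent_def phi_yvar)
  finally have dB: "det B = yvar k k * cofactor B p q" .
  have md: "mat_delete B p q = M'"
  proof (rule eq_matI)
    fix a b assume ab: "a < dim_row M'" "b < dim_col M'"
    then have a: "a < length rs'" and b: "b < length cs'" using lrs' unfolding M'_def N'_def by auto
    have "rs' ! a \<in> R" using a R unfolding rs'_def by (simp add: sorted_nth_in)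
    then have ne: "rs' ! a \<noteq> k" using kR by auto
    have ia: "(if a < p then a else Suc a) < N" "(if b < q then b else Suc b) < N"
      using a b lrs' unfolding N_def N'_def by auto
    have abN: "a < N - 1" "b < N - 1" using a b lrs' unfolding N_def N'_def by auto
    have "mat_delete B p q $$ (a, b) = B $$ (insert_index p a, insert_index q b)"
      using abN Bc unfolding mat_delete_def insert_index_def by simp
    also have "\<dots> = phi k (Yent (rs ! insert_index p a) (cs ! insert_index q b))"
      using ia unfolding B_def M_def insert_index_def by simp
    also have "\<dots> = Yent (rs' ! a) (cs' ! b)"
      using p(4)[OF a] q(4)[OF b] ne by (simp add: phi_Yent)
    also have "\<dots> = M' $$ (a, b)" using a b lrs' unfolding M'_def N'_def by simp
    finally show "mat_delete B p q $$ (a, b) = M' $$ (a, b)" .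
  qed (auto simp: mat_delete_def B_def M_def M'_def N_def)
  have "det B = yvar k k * ((-1) ^ (p + q) * det M')"
    by (simp add: dB cofactor_def md)
  moreover have "phi k (det M) = det B" unfolding B_def by simp
  ultimately have "phi k (minor_det (insert k R) (insert k S)) = const_poly ((-1) ^ (p + q)) * yvar k k * minor_det R S"
    by (simp add: m1 m2 const_poly_neg_one_pow mult_ac)
  then show ?thesis by (intro exI[of _ "(-1) ^ (p + q)"]) simp
qed


lemma const_poly_prod: "const_poly (\<Prod>j\<in>J. e j) = (\<Prod>j\<in>J. const_poly (e j))"
proof (induction J rule: infinite_finite_induct)
  case (infinite A) then show ?case by (simp add: const_poly_one)
next
  case empty then show ?case by (simp add: const_poly_one)
next
  case (insert x F) then show ?case by (simp add: const_poly_mult)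
qed

lemma nzd_prod: "(\<And>j. j \<in> J \<Longrightarrow> nzd (f j)) \<Longrightarrow> nzd (\<Prod>j\<in>J. f j)"
proof (induction J rule: infinite_finite_induct)
  case (infinite A) then show ?case by (simp add: nzd_one)
next
  case empty then show ?case by (simp add: nzd_one)
next
  case (insert x F) then show ?case by (simp add: nzd_mult)
qed

theorem lemma5p7:
  fixes n k l m :: nat and D :: "(nat \<times> nat) set"
    and Ch :: "nat \<Rightarrow> (nat \<times> nat) set"
  assumes "is_diagram n D"
    and "k \<in> {1..n}" and "l \<in> {1..n}"
    and "\<And>i. i \<in> {1..m} \<Longrightarrow> Ch i \<subseteq> ({1..n} - {k}) \<times> ({1..n} - {l})"
    and "\<And>i. i \<in> {1..m} \<Longrightarrow> diag_le n (Ch i) (hat k l D)"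
    and "lin_dep m (\<lambda>i. \<Prod>j \<in> {1..n}. minor_det (col (aug k l D (Ch i)) j) (col D j))"
  shows "lin_dep m (\<lambda>i. \<Prod>j \<in> {1..n} - {l}. minor_det (col (Ch i) j) (col (hat k l D) j))"
proof -
  note diagD = assms(1) and kn = assms(2) and ln = assms(3) and ChS = assms(4) and le = assms(5)
  define J where "J = {1..n} - {l}"
  define f where "f i j = minor_det (col (aug k l D (Ch i)) j) (col D j)" for i j
  define g where "g i j = minor_det (col (Ch i) j) (col (hat k l D) j)" for i j
  define w where "w j = (if (k, j) \<in> D then yvar k k else 1)" for j
  define W where "W = minor_det (col D l) (col D l) * (\<Prod>j\<in>J. w j)"
  have finD: "finite D" using diagD unfolding is_diagram_def
    by (rule finite_subset) simp
  have fincolD: "finite (col D j)" for j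
    by (rule finite_subset[of _ "fst ` D"]) (use finD in \<open>force simp: col_def image_iff\<close>, use finD in simp)
  have fincolH: "finite (col (hat k l D) j)" for j
    by (rule finite_subset[OF _ fincolD[of j]]) (auto simp: col_def hat_def)
  have fincolC: "finite (col (Ch i) j)" if "i \<in> {1..m}" for i j
    by (rule finite_subset[of _ "{1..n}"]) (use ChS[OF that] in \<open>auto simp: col_def\<close>)
  have nzdW: "nzd W"
    unfolding W_def
    by (intro nzd_mult nzd_minor_diag fincolD nzd_prod) (simp add: w_def nzd_yvar nzd_one)
  have claim: "\<exists>e. e \<noteq> 0 \<and> phi k (\<Prod>j\<in>{1..n}. f i j) = const_poly e * W * (\<Prod>j\<in>J. g i j)"
    if i: "i \<in> {1..m}" for i
  proof -
    have colsj: "\<exists>e. e \<noteq> 0 \<and> phi k (f i j) = const_poly e * w j * g i j" if j: "j \<in> J" for j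
    proof -
      have jl: "j \<noteq> l" using j unfolding J_def by auto
      have kC: "k \<notin> col (Ch i) j" using ChS[OF i] by (auto simp: col_def)
      have kH: "k \<notin> col (hat k l D) j" by (auto simp: col_def hat_def)
      have cardeq: "card (col (Ch i) j) = card (col (hat k l D) j)"
        using le[OF i] j unfolding diag_le_def set_le_def J_def by auto
      have lC: "(a, l) \<notin> Ch i" for a using ChS[OF i] by auto
      show ?thesis
      proof (cases "(k, j) \<in> D")
        case True
        have c1: "col (aug k l D (Ch i)) j = insert k (col (Ch i) j)"
          using True jl by (auto simp: col_def aug_def)
        have c2: "col D j = insert k (col (hat k l D) j)"
          using True jl by (auto simp: col_def hat_def)
        show ?thesis
          using minor_det_ins[OF fincolC[OF i] fincolH kC kH cardeq] True
          unfolding f_def g_def w_def c1 c2 by simp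
      next
        case False
        have c1: "col (aug k l D (Ch i)) j = col (Ch i) j"
          using False jl by (auto simp: col_def aug_def)
        have c2: "col D j = col (hat k l D) j"
          using False jl by (auto simp: col_def hat_def)
        show ?thesis
          using minor_det_fix[OF fincolC[OF i] kC, of "col (hat k l D) j"] False
          unfolding f_def g_def w_def c1 c2
          by (intro exI[of _ 1]) (simp add: const_poly_one)
      qed
    qed
    then obtain E where E: "\<And>j. j \<in> J \<Longrightarrow> E j \<noteq> 0 \<and> phi k (f i j) = const_poly (E j) * w j * g i j"
      by metis
    have fl: "phi k (f i l) = minor_det (col D l) (col D l)"
    proof -
      have "col (aug k l D (Ch i)) l = col D l"
        using ChS[OF i] by (auto simp: col_def aug_def)
      then show ?thesis unfolding f_def by (simp add: phi_minor_diag fincolD)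
    qed
    have "(\<Prod>j\<in>{1..n}. f i j) = f i l * (\<Prod>j\<in>J. f i j)"
      unfolding J_def using ln by (simp add: prod.remove)
    then have "phi k (\<Prod>j\<in>{1..n}. f i j) = phi k (f i l) * (\<Prod>j\<in>J. phi k (f i j))"
      by (simp add: phi_hom.hom_prod phi_mult)
    also have "(\<Prod>j\<in>J. phi k (f i j)) = (\<Prod>j\<in>J. const_poly (E j) * w j * g i j)"
      using E by (intro prod.cong) auto
    also have "\<dots> = const_poly (\<Prod>j\<in>J. E j) * (\<Prod>j\<in>J. w j) * (\<Prod>j\<in>J. g i j)"
      by (simp add: prod.distrib const_poly_prod)
    finally have "phi k (\<Prod>j\<in>{1..n}. f i j) = const_poly (\<Prod>j\<in>J. E j) * W * (\<Prod>j\<in>J. g i j)"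
      unfolding fl W_def by (simp add: mult_ac)
    moreover have "(\<Prod>j\<in>J. E j) \<noteq> 0"
      using E unfolding J_def by (simp add: prod_zero_iff)
    ultimately show ?thesis by blast
  qed
  then obtain e where e: "\<And>i. i \<in> {1..m} \<Longrightarrow> e i \<noteq> 0 \<and>
      phi k (\<Prod>j\<in>{1..n}. f i j) = const_poly (e i) * W * (\<Prod>j\<in>J. g i j)"
    by metis
  from assms(6) obtain c where c: "\<exists>i\<in>{1..m}. c i \<noteq> 0"
    and sum0: "(\<Sum>i = 1..m. const_poly (c i) * (\<Prod>j\<in>{1..n}. f i j)) = 0"
    unfolding lin_dep_def f_def by blast
  have "0 = phi k (\<Sum>i = 1..m. const_poly (c i) * (\<Prod>j\<in>{1..n}. f i j))"
    using sum0 by (simp add: phi_zero)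
  also have "\<dots> = (\<Sum>i = 1..m. const_poly (c i) * phi k (\<Prod>j\<in>{1..n}. f i j))"
    by (simp add: phi_hom.hom_sum phi_mult phi_const)
  also have "\<dots> = (\<Sum>i = 1..m. W * (const_poly (c i * e i) * (\<Prod>j\<in>J. g i j)))"
  proof (rule sum.cong)
    fix i assume i: "i \<in> {1..m}"
    show "const_poly (c i) * phi k (\<Prod>j\<in>{1..n}. f i j) = W * (const_poly (c i * e i) * (\<Prod>j\<in>J. g i j))"
    proof -
      have "phi k (\<Prod>j\<in>{1..n}. f i j) = const_poly (e i) * W * (\<Prod>j\<in>J. g i j)"
        using e[OF i] by blast
      moreover have "const_poly (c i) * (const_poly (e i) * W * G) = W * (const_poly (c i * e i) * G)" for G
        unfolding const_poly_mult by (simp only: mult.assoc mult.left_commute)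
      ultimately show ?thesis by simp
    qed
  qed simp
  also have "\<dots> = W * (\<Sum>i = 1..m. const_poly (c i * e i) * (\<Prod>j\<in>J. g i j))"
    by (simp add: sum_distrib_left)
  finally have "W * (\<Sum>i = 1..m. const_poly (c i * e i) * (\<Prod>j\<in>J. g i j)) = 0"
    by (rule sym)
  then have "(\<Sum>i = 1..m. const_poly (c i * e i) * (\<Prod>j\<in>J. g i j)) = 0"
    using nzdW unfolding nzd_def by blast
  moreover have "\<exists>i\<in>{1..m}. c i * e i \<noteq> 0" using c e by auto
  ultimately show ?thesis unfolding lin_dep_def g_def J_def
    by (intro exI[of _ "\<lambda>i. c i * e i"] conjI)
qed

end
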